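(* Let $n,m\ge 2$. Suppose there exists a total $2$-dominating set $S$ of $K_n\Box K_m$ of minimum cardinality (i.e. $|S|=\gamma_{2t}(K_n\Box K_m)$) such that $S\cap(\{v\}\times V(K_m))\neq\emptyset$ for every $v\in V(K_n)$ and $S\cap(V(K_n)\times\{w\})\neq\emptyset$ for every $w\in V(K_m)$. Then \[ \gamma_{2t}(K_{n+4}\Box K_{m+4})=\gamma_{2t}(K_n\Box K_m)+6. \]
   Context: For a graph $G=(V,E)$, a set $S\subseteq V$ is a total $2$-dominating set if every vertex of $V$ (including those in $S$) is adjacent to at least $2$ vertices of $S$; $\gamma_{2t}(G)$ is the minimum cardinality of such a set. $G\Box H$ denotes the Cartesian product: vertex set $V(G)\times V(H)$, with $(u_1,v_1)\sim(u_2,v_2)$ iff either $u_1=u_2$ and $v_1\sim v_2$, or $v_1=v_2$ and $u_1\sim u_2$. $K_n$ is the complete graph on $n$ vertices. *)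

theory Defs
  imports Main
begin

definition complete_graph_verts :: "nat \<Rightarrow> nat set" where
  "complete_graph_verts n = {0..<n}"

definition complete_graph_adj :: "nat \<Rightarrow> nat \<Rightarrow> bool" where
  "complete_graph_adj u v \<longleftrightarrow> u \<noteq> v"

definition cart_prod_adj ::
  "('a \<Rightarrow> 'a \<Rightarrow> bool) \<Rightarrow> ('b \<Rightarrow> 'b \<Rightarrow> bool) \<Rightarrow> 'a \<times> 'b \<Rightarrow> 'a \<times> 'b \<Rightarrow> bool" where
  "cart_prod_adj EG EH x y \<longleftrightarrow>
     (fst x = fst y \<and> EH (snd x) (snd y)) \<or> (snd x = snd y \<and> EG (fst x) (fst y))"

definition total_k_dominating :: "'a set \<Rightarrow> ('a \<Rightarrow> 'a \<Rightarrow> bool) \<Rightarrow> nat \<Rightarrow> 'a set \<Rightarrow> bool" where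
  "total_k_dominating V E k S \<longleftrightarrow> S \<subseteq> V \<and> (\<forall>v\<in>V. card {u\<in>S. E v u} \<ge> k)"

definition gamma_2t :: "'a set \<Rightarrow> ('a \<Rightarrow> 'a \<Rightarrow> bool) \<Rightarrow> nat" where
  "gamma_2t V E = (LEAST c. \<exists>S. total_k_dominating V E 2 S \<and> card S = c)"

definition rook_verts :: "nat \<Rightarrow> nat \<Rightarrow> (nat \<times> nat) set" where
  "rook_verts n m = complete_graph_verts n \<times> complete_graph_verts m"

definition rook_adj :: "nat \<times> nat \<Rightarrow> nat \<times> nat \<Rightarrow> bool" where
  "rook_adj = cart_prod_adj complete_graph_adj complete_graph_adj"

end

theory Submission
  imports Defs Complex_Main
begin

definition RR :: "(nat\<times>nat) set \<Rightarrow> nat \<Rightarrow> nat set" where "RR S i = {j. (i,j) \<in> S}"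
definition CC :: "(nat\<times>nat) set \<Rightarrow> nat \<Rightarrow> nat set" where "CC S j = {i. (i,j) \<in> S}"

lemma board: "rook_verts n m = {..<n} \<times> {..<m}"
  by (auto simp: rook_verts_def complete_graph_verts_def)

lemma RR_sub: "S \<subseteq> rook_verts n m \<Longrightarrow> RR S i \<subseteq> {..<m}"
  by (auto simp: RR_def board)
lemma CC_sub: "S \<subseteq> rook_verts n m \<Longrightarrow> CC S j \<subseteq> {..<n}"
  by (auto simp: CC_def board)
lemma RR_fin: "S \<subseteq> rook_verts n m \<Longrightarrow> finite (RR S i)"
  by (rule finite_subset[OF RR_sub]) auto
lemma CC_fin: "S \<subseteq> rook_verts n m \<Longrightarrow> finite (CC S j)"
  by (rule finite_subset[OF CC_sub]) auto

lemma nbr_card: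
  assumes "S \<subseteq> rook_verts n m"
  shows "card {u\<in>S. rook_adj (i,j) u} = card (RR S i - {j}) + card (CC S j - {i})"
proof -
  have adj: "rook_adj (i,j) (a,b) \<longleftrightarrow> (i = a \<and> j \<noteq> b) \<or> (j = b \<and> i \<noteq> a)" for a b
    by (simp add: rook_adj_def cart_prod_adj_def complete_graph_adj_def)
  have eq: "{u\<in>S. rook_adj (i,j) u} = Pair i ` (RR S i - {j}) \<union> (\<lambda>a. (a,j)) ` (CC S j - {i})"
  proof (rule set_eqI)
    fix u :: "nat \<times> nat"
    obtain a b where u: "u = (a,b)" by (cases u)
    show "u \<in> {u\<in>S. rook_adj (i,j) u} \<longleftrightarrow> u \<in> Pair i ` (RR S i - {j}) \<union> (\<lambda>a. (a,j)) ` (CC S j - {i})"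
    proof -
      have e1: "(a,b) \<in> Pair i ` X \<longleftrightarrow> a = i \<and> b \<in> X" for X by auto
      have e2: "(a,b) \<in> (\<lambda>a. (a,j)) ` Y \<longleftrightarrow> b = j \<and> a \<in> Y" for Y by auto
      show ?thesis unfolding u e1 e2 by (simp add: adj RR_def CC_def) blast
    qed
  qed
  have f1: "finite (Pair i ` (RR S i - {j}))" using RR_fin[OF assms, of i] by simp
  have f2: "finite ((\<lambda>a. (a,j)) ` (CC S j - {i}))" using CC_fin[OF assms, of j] by simp
  have d: "Pair i ` (RR S i - {j}) \<inter> (\<lambda>a. (a,j)) ` (CC S j - {i}) = {}" by auto
  have "card {u\<in>S. rook_adj (i,j) u} = card (Pair i ` (RR S i - {j}) \<union> (\<lambda>a. (a,j)) ` (CC S j - {i}))"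
    unfolding eq ..
  also have "\<dots> = card (Pair i ` (RR S i - {j})) + card ((\<lambda>a. (a,j)) ` (CC S j - {i}))"
    by (rule card_Un_disjoint[OF f1 f2 d])
  also have "\<dots> = card (RR S i - {j}) + card (CC S j - {i})"
    by (simp add: card_image inj_on_def)
  finally show ?thesis .
qed

lemma tkd_iff:
  "total_k_dominating (rook_verts n m) rook_adj 2 S \<longleftrightarrow>
   S \<subseteq> rook_verts n m \<and> (\<forall>i<n. \<forall>j<m. card (RR S i - {j}) + card (CC S j - {i}) \<ge> 2)"
proof
  assume h: "total_k_dominating (rook_verts n m) rook_adj 2 S"
  hence sub: "S \<subseteq> rook_verts n m" by (simp add: total_k_dominating_def)
  show "S \<subseteq> rook_verts n m \<and> (\<forall>i<n. \<forall>j<m. card (RR S i - {j}) + card (CC S j - {i}) \<ge> 2)"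
  proof (intro conjI sub allI impI)
    fix i j assume "i < n" "j < m"
    hence "(i,j) \<in> rook_verts n m" by (simp add: board)
    thus "card (RR S i - {j}) + card (CC S j - {i}) \<ge> 2"
      using h nbr_card[OF sub, of i j] by (auto simp: total_k_dominating_def)
  qed
next
  assume h: "S \<subseteq> rook_verts n m \<and> (\<forall>i<n. \<forall>j<m. card (RR S i - {j}) + card (CC S j - {i}) \<ge> 2)"
  show "total_k_dominating (rook_verts n m) rook_adj 2 S"
    unfolding total_k_dominating_def
  proof (intro conjI ballI)
    show "S \<subseteq> rook_verts n m" using h by simp
    fix v assume "v \<in> rook_verts n m"
    then obtain i j where v: "v = (i,j)" "i < n" "j < m" by (auto simp: board)
    thus "2 \<le> card {u \<in> S. rook_adj v u}" using h nbr_card[of S n m i j] by auto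
  qed
qed

lemma gamma_le:
  assumes "total_k_dominating (rook_verts n m) rook_adj 2 S"
  shows "gamma_2t (rook_verts n m) rook_adj \<le> card S"
  unfolding gamma_2t_def by (rule Least_le) (use assms in blast)

lemma gamma_ex:
  assumes "total_k_dominating (rook_verts n m) rook_adj 2 S"
  shows "\<exists>S'. total_k_dominating (rook_verts n m) rook_adj 2 S' \<and> card S' = gamma_2t (rook_verts n m) rook_adj"
  unfolding gamma_2t_def by (rule LeastI_ex) (use assms in blast)

lemma crit:
  assumes sub: "S \<subseteq> rook_verts n m"
    and rows: "\<forall>i<n. RR S i \<noteq> {}" and cols: "\<forall>j<m. CC S j \<noteq> {}"
    and cells: "\<forall>i j. (i,j) \<in> S \<longrightarrow> card (RR S i) \<ge> 3 \<or> card (CC S j) \<ge> 3"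
  shows "total_k_dominating (rook_verts n m) rook_adj 2 S"
  unfolding tkd_iff
proof (intro conjI sub allI impI)
  fix i j assume ij: "i < n" "j < m"
  have fR: "finite (RR S i)" and fC: "finite (CC S j)" using RR_fin[OF sub] CC_fin[OF sub] by auto
  show "card (RR S i - {j}) + card (CC S j - {i}) \<ge> 2"
  proof (cases "(i,j) \<in> S")
    case True
    hence jR: "j \<in> RR S i" and iC: "i \<in> CC S j" by (auto simp: RR_def CC_def)
    have a: "card (RR S i - {j}) = card (RR S i) - 1" using jR fR by simp
    have b: "card (CC S j - {i}) = card (CC S j) - 1" using iC fC by simp
    have "card (RR S i) \<ge> 1" "card (CC S j) \<ge> 1" using jR iC fR fC
      by (auto simp: Suc_le_eq card_gt_0_iff)
    then show ?thesis using cells True a b by force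
  next
    case False
    hence "RR S i - {j} = RR S i" "CC S j - {i} = CC S j" by (auto simp: RR_def CC_def)
    moreover have "card (RR S i) \<ge> 1" "card (CC S j) \<ge> 1" using rows cols ij fR fC
      by (auto simp: Suc_le_eq card_gt_0_iff)
    ultimately show ?thesis by simp
  qed
qed

lemma two_rows:
  assumes "n \<ge> 2" "m \<ge> 2"
  shows "gamma_2t (rook_verts n m) rook_adj \<le> 2*m"
proof -
  let ?S = "{0,1} \<times> {..<m} :: (nat\<times>nat) set"
  have R: "RR ?S i = (if i < 2 then {..<m} else {})" for i by (auto simp: RR_def)
  have C: "j < m \<Longrightarrow> CC ?S j = {0,1}" for j by (auto simp: CC_def)
  have "total_k_dominating (rook_verts n m) rook_adj 2 ?S"
    unfolding tkd_iff
  proof (intro conjI allI impI)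
    show "?S \<subseteq> rook_verts n m" using assms by (auto simp: board)
    fix i j assume ij: "i < n" "j < m"
    show "2 \<le> card (RR ?S i - {j}) + card (CC ?S j - {i})"
    proof (cases "i < 2")
      case True
      hence "card (RR ?S i - {j}) = m - 1" using ij R by simp
      moreover have "card (CC ?S j - {i}) = 1" using C[OF ij(2)] True by (cases i) auto
      ultimately show ?thesis using assms by simp
    next
      case False
      hence "CC ?S j - {i} = {0,1}" using C[OF ij(2)] by auto
      thus ?thesis by simp
    qed
  qed
  hence "gamma_2t (rook_verts n m) rook_adj \<le> card ?S" by (rule gamma_le)
  also have "card ?S = 2*m" by (simp add: card_cartesian_product)
  finally show ?thesis .
qed

lemma two_cols:
  assumes "n \<ge> 2" "m \<ge> 2"
  shows "gamma_2t (rook_verts n m) rook_adj \<le> 2*n"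
proof -
  let ?S = "{..<n} \<times> {0,1} :: (nat\<times>nat) set"
  have C: "CC ?S j = (if j < 2 then {..<n} else {})" for j by (auto simp: CC_def)
  have R: "i < n \<Longrightarrow> RR ?S i = {0,1}" for i by (auto simp: RR_def)
  have "total_k_dominating (rook_verts n m) rook_adj 2 ?S"
    unfolding tkd_iff
  proof (intro conjI allI impI)
    show "?S \<subseteq> rook_verts n m" using assms by (auto simp: board)
    fix i j assume ij: "i < n" "j < m"
    show "2 \<le> card (RR ?S i - {j}) + card (CC ?S j - {i})"
    proof (cases "j < 2")
      case True
      hence "card (CC ?S j - {i}) = n - 1" using ij C by simp
      moreover have "card (RR ?S i - {j}) = 1" using R[OF ij(1)] True by (cases j) auto
      ultimately show ?thesis using assms by simp
    next
      case False
      hence "RR ?S i - {j} = {0,1}" using R[OF ij(1)] by auto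
      thus ?thesis by simp
    qed
  qed
  hence "gamma_2t (rook_verts n m) rook_adj \<le> card ?S" by (rule gamma_le)
  also have "card ?S = 2*n" by (simp add: card_cartesian_product)
  finally show ?thesis .
qed

lemma card3: "a \<noteq> b \<Longrightarrow> a \<noteq> c \<Longrightarrow> b \<noteq> c \<Longrightarrow> {a,b,c} \<subseteq> X \<Longrightarrow> finite X \<Longrightarrow> card X \<ge> 3"
  by (metis card_3_iff card_mono)

lemma g33: "gamma_2t (rook_verts 3 3) rook_adj \<le> 5"
proof -
  let ?S = "{(0,0),(0,1),(0,2),(1,0),(2,0)} :: (nat\<times>nat) set"
  have sub: "?S \<subseteq> rook_verts 3 3" by (auto simp: board)
  have R0: "{0,1,2} \<subseteq> RR ?S 0" and C0: "{0,1,2} \<subseteq> CC ?S 0" by (auto simp: RR_def CC_def)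
  have "total_k_dominating (rook_verts 3 3) rook_adj 2 ?S"
  proof (rule crit[OF sub])
    show "\<forall>i<3. RR ?S i \<noteq> {}"
    proof (intro allI impI)
      fix i :: nat assume "i < 3" hence "i = 0 \<or> i = 1 \<or> i = 2" by auto
      thus "RR ?S i \<noteq> {}" by (auto simp: RR_def)
    qed
    show "\<forall>j<3. CC ?S j \<noteq> {}"
    proof (intro allI impI)
      fix j :: nat assume "j < 3" hence "j = 0 \<or> j = 1 \<or> j = 2" by auto
      thus "CC ?S j \<noteq> {}" by (auto simp: CC_def)
    qed
    have r: "card (RR ?S 0) \<ge> 3" by (rule card3[OF _ _ _ R0 RR_fin[OF sub]]) auto
    have c: "card (CC ?S 0) \<ge> 3" by (rule card3[OF _ _ _ C0 CC_fin[OF sub]]) auto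
    show "\<forall>i j. (i,j) \<in> ?S \<longrightarrow> card (RR ?S i) \<ge> 3 \<or> card (CC ?S j) \<ge> 3"
      using r c by auto
  qed
  hence "gamma_2t (rook_verts 3 3) rook_adj \<le> card ?S" by (rule gamma_le)
  also have "card ?S = 5" by simp
  finally show ?thesis .
qed

lemma stars:
  assumes x1: "1 \<le> x" and y1: "1 \<le> y" and hn: "x + 3*y \<le> n" and hm: "3*x + y \<le> m"
  shows "gamma_2t (rook_verts n m) rook_adj \<le> n + m - x - y"
proof -
  define A where "A = (\<lambda>j. (j div 3, j)) ` {..<3*x}"
  define B where "B = (\<lambda>i. (i, 3*x + (i - x) div 3)) ` {x..<x+3*y}"
  define E1 where "E1 = (\<lambda>i. (i, 3*x)) ` {x+3*y..<n}"
  define E2 where "E2 = (\<lambda>j. (0::nat, j)) ` {3*x+y..<m}"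
  define S where "S = A \<union> B \<union> E1 \<union> E2"
  have sub: "S \<subseteq> rook_verts n m"
  proof -
    have "A \<subseteq> {..<n} \<times> {..<m}"
    proof
      fix p assume "p \<in> A"
      then obtain j where j: "j < 3*x" "p = (j div 3, j)" unfolding A_def by auto
      have "j div 3 < x" using j(1) by (metis less_mult_imp_div_less mult.commute)
      thus "p \<in> {..<n} \<times> {..<m}" using j hn hm by auto
    qed
    moreover have "B \<subseteq> {..<n} \<times> {..<m}"
    proof
      fix p assume "p \<in> B"
      then obtain i where i: "x \<le> i" "i < x+3*y" "p = (i, 3*x + (i - x) div 3)" unfolding B_def by auto
      have "i - x < y*3" using i by linarith
      hence "(i - x) div 3 < y" by (rule less_mult_imp_div_less)
      thus "p \<in> {..<n} \<times> {..<m}" using i hn hm by auto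
    qed
    moreover have "E1 \<subseteq> {..<n} \<times> {..<m}" unfolding E1_def using hm y1 by auto
    moreover have "E2 \<subseteq> {..<n} \<times> {..<m}" unfolding E2_def using hn x1 by auto
    ultimately show ?thesis unfolding S_def board by blast
  qed
  have Amem: "k < x \<Longrightarrow> s < 3 \<Longrightarrow> (k, 3*k+s) \<in> S" for k s
    unfolding S_def A_def by (rule UnI1, rule UnI1, rule UnI1, rule image_eqI[where x="3*k+s"]) auto
  have Bmem: "l < y \<Longrightarrow> s < 3 \<Longrightarrow> (x+3*l+s, 3*x+l) \<in> S" for l s
    unfolding S_def B_def by (rule UnI1, rule UnI1, rule UnI2, rule image_eqI[where x="x+3*l+s"]) auto
  have rows: "\<forall>i<n. RR S i \<noteq> {}"
  proof (intro allI impI)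
    fix i assume i: "i < n"
    have "\<exists>j. (i,j) \<in> S"
    proof (cases "i < x")
      case True thus ?thesis using Amem[of i 0] by auto
    next
      case F: False
      show ?thesis
      proof (cases "i < x + 3*y")
        case True
        have "(i, 3*x + (i - x) div 3) \<in> B" unfolding B_def using F True by auto
        thus ?thesis unfolding S_def by blast
      next
        case False
        have "(i, 3*x) \<in> E1" unfolding E1_def using False i by auto
        thus ?thesis unfolding S_def by blast
      qed
    qed
    thus "RR S i \<noteq> {}" by (auto simp: RR_def)
  qed
  have cols: "\<forall>j<m. CC S j \<noteq> {}"
  proof (intro allI impI)
    fix j assume j: "j < m"
    have "\<exists>i. (i,j) \<in> S"
    proof (cases "j < 3*x")
      case True
      have "(j div 3, j) \<in> A" unfolding A_def using True by auto
      thus ?thesis unfolding S_def by blast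
    next
      case F: False
      show ?thesis
      proof (cases "j < 3*x + y")
        case True
        have "(x+3*(j-3*x)+0, 3*x+(j-3*x)) \<in> S" by (rule Bmem) (use F True in auto)
        thus ?thesis using F by auto
      next
        case False
        have "(0, j) \<in> E2" unfolding E2_def using False j by auto
        thus ?thesis unfolding S_def by blast
      qed
    qed
    thus "CC S j \<noteq> {}" by (auto simp: CC_def)
  qed
  have rowA: "card (RR S k) \<ge> 3" if "k < x" for k
  proof (rule card3[OF _ _ _ _ RR_fin[OF sub]])
    show "{3*k+0, 3*k+1, 3*k+2} \<subseteq> RR S k" using Amem[OF that, of 0] Amem[OF that, of 1] Amem[OF that, of 2] by (simp add: RR_def)
  qed auto
  have colB: "card (CC S (3*x+l)) \<ge> 3" if "l < y" for l
  proof (rule card3[OF _ _ _ _ CC_fin[OF sub]])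
    show "{x+3*l+0, x+3*l+1, x+3*l+2} \<subseteq> CC S (3*x+l)" using Bmem[OF that, of 0] Bmem[OF that, of 1] Bmem[OF that, of 2] by (simp add: CC_def)
  qed auto
  have cells: "\<forall>i j. (i,j) \<in> S \<longrightarrow> card (RR S i) \<ge> 3 \<or> card (CC S j) \<ge> 3"
  proof (intro allI impI)
    fix i j assume "(i,j) \<in> S"
    hence "(i,j) \<in> A \<or> (i,j) \<in> B \<or> (i,j) \<in> E1 \<or> (i,j) \<in> E2" unfolding S_def by blast
    thus "card (RR S i) \<ge> 3 \<or> card (CC S j) \<ge> 3"
    proof (elim disjE)
      assume "(i,j) \<in> A"
      then obtain j' where "j' < 3*x" "i = j' div 3" unfolding A_def by auto
      hence "i < x" by linarith
      thus ?thesis using rowA by blast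
    next
      assume "(i,j) \<in> B"
      then obtain i' where "x \<le> i'" "i' < x+3*y" "j = 3*x + (i'-x) div 3" unfolding B_def by auto
      moreover have "(i'-x) div 3 < y" using calculation by linarith
      ultimately show ?thesis using colB by blast
    next
      assume "(i,j) \<in> E1"
      hence "j = 3*x + 0" unfolding E1_def by auto
      thus ?thesis using colB[of 0] y1 by auto
    next
      assume "(i,j) \<in> E2"
      hence "i = 0" unfolding E2_def by auto
      thus ?thesis using rowA[of 0] x1 by auto
    qed
  qed
  have tk: "total_k_dominating (rook_verts n m) rook_adj 2 S" by (rule crit[OF sub rows cols cells])
  have "card S \<le> card A + card B + card E1 + card E2"
    unfolding S_def by (meson card_Un_le add_le_mono order_trans le_refl)
  also have "\<dots> \<le> 3*x + 3*y + (n - (x+3*y)) + (m - (3*x+y))"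
    unfolding A_def B_def E1_def E2_def
    by (intro add_mono) (rule order_trans[OF card_image_le], simp_all)+
  also have "\<dots> = n + m - x - y" using hn hm by simp
  finally show ?thesis using gamma_le[OF tk] by linarith
qed

lemma frac_nat:
  fixes r c :: nat assumes "r\<ge>1" "c\<ge>1" "r+c\<ge>4"
  shows "3*(r+c) \<le> 4*(r*c)" and "3*(r+c) = 4*(r*c) \<Longrightarrow> (r=1\<and>c=3)\<or>(r=3\<and>c=1)"
proof -
  have main: "r = 1 \<or> c = 1 \<or> 4*(r+c) \<le> 4*(r*c)"
  proof (cases "r = 1 \<or> c = 1")
    case False
    hence "r \<ge> 2" "c \<ge> 2" using assms by auto
    hence a: "2*c \<le> r*c" using mult_le_mono1 by blast
    have "r*2 \<le> r*c" using \<open>c \<ge> 2\<close> mult_le_mono2 by blast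
    hence b: "2*r \<le> r*c" by simp
    have "4*(r+c) = 2*(2*c+2*r)" by simp
    also have "\<dots> \<le> 2*(r*c+r*c)" using add_mono[OF a b] by (rule mult_le_mono2)
    also have "\<dots> = 4*(r*c)" by simp
    finally have "4*(r+c) \<le> 4*(r*c)" .
    thus ?thesis by simp
  qed blast
  show "3*(r+c) \<le> 4*(r*c)" using main assms by auto
  show "3*(r+c) = 4*(r*c) \<Longrightarrow> (r=1\<and>c=3)\<or>(r=3\<and>c=1)" using main assms by auto
qed

lemma frac:
  fixes r c :: nat assumes "r\<ge>1" "c\<ge>1" "r+c\<ge>4"
  shows "1/real r + 1/real c \<le> 4/3" and "1/real r + 1/real c = 4/3 \<Longrightarrow> (r=1\<and>c=3)\<or>(r=3\<and>c=1)"
proof -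
  have pos: "real r > 0" "real c > 0" using assms by auto
  have eq: "1/real r + 1/real c = real (r+c) / real (r*c)" using pos by (simp add: field_simps)
  have iff: "real (r+c) / real (r*c) \<le> 4/3 \<longleftrightarrow> 3*(r+c) \<le> 4*(r*c)"
  proof -
    have "real (r+c) / real (r*c) \<le> 4/3 \<longleftrightarrow> 3 * real (r+c) \<le> 4 * real (r*c)"
      using pos by (simp add: divide_le_eq field_simps)
    also have "\<dots> \<longleftrightarrow> 3*(r+c) \<le> 4*(r*c)" by linarith
    finally show ?thesis .
  qed
  have iff2: "real (r+c) / real (r*c) = 4/3 \<longleftrightarrow> 3*(r+c) = 4*(r*c)"
  proof -
    have "real (r+c) / real (r*c) = 4/3 \<longleftrightarrow> 3 * real (r+c) = 4 * real (r*c)"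
      using pos by (simp add: divide_eq_eq field_simps)
    also have "\<dots> \<longleftrightarrow> 3*(r+c) = 4*(r*c)" by linarith
    finally show ?thesis .
  qed
  show "1/real r + 1/real c \<le> 4/3" using eq iff frac_nat(1)[OF assms] by simp
  show "1/real r + 1/real c = 4/3 \<Longrightarrow> (r=1\<and>c=3)\<or>(r=3\<and>c=1)" using eq iff2 frac_nat(2)[OF assms] by simp
qed

lemma S_rows: "S \<subseteq> rook_verts n m \<Longrightarrow> S = Sigma {..<n} (RR S)"
  by (auto simp: RR_def board)
lemma S_cols: "S \<subseteq> rook_verts n m \<Longrightarrow> prod.swap ` S = Sigma {..<m} (CC S)"
  by (auto simp: CC_def board)

lemma card_cols:
  assumes "S \<subseteq> rook_verts n m"
  shows "card S = (\<Sum>j<m. card (CC S j))"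
proof -
  have "card S = card (prod.swap ` S)" by (simp add: card_image)
  also have "\<dots> = card (Sigma {..<m} (CC S))" using S_cols[OF assms] by simp
  also have "\<dots> = (\<Sum>j<m. card (CC S j))" using CC_fin[OF assms] by simp
  finally show ?thesis .
qed

lemma sum_rows:
  assumes "S \<subseteq> rook_verts n m"
  shows "(\<Sum>p\<in>S. (f (fst p)::real)) = (\<Sum>i<n. real (card (RR S i)) * f i)"
proof -
  have "(\<Sum>p\<in>S. f (fst p)) = (\<Sum>p\<in>Sigma {..<n} (RR S). f (fst p))"
    using S_rows[OF assms] by simp
  also have "\<dots> = (\<Sum>i<n. \<Sum>j\<in>RR S i. f i)"
    by (subst sum.Sigma) (use RR_fin[OF assms] in \<open>auto simp: split_def\<close>)
  also have "\<dots> = (\<Sum>i<n. real (card (RR S i)) * f i)" by simp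
  finally show ?thesis .
qed

lemma sum_cols:
  assumes "S \<subseteq> rook_verts n m"
  shows "(\<Sum>p\<in>S. (f (snd p)::real)) = (\<Sum>j<m. real (card (CC S j)) * f j)"
proof -
  have "(\<Sum>p\<in>S. f (snd p)) = (\<Sum>q\<in>prod.swap ` S. f (fst q))"
    by (subst sum.reindex) (auto simp: comp_def)
  also have "\<dots> = (\<Sum>q\<in>Sigma {..<m} (CC S). f (fst q))"
    using S_cols[OF assms] by simp
  also have "\<dots> = (\<Sum>j<m. \<Sum>i\<in>CC S j. f j)"
    by (subst sum.Sigma) (use CC_fin[OF assms] in \<open>auto simp: split_def\<close>)
  also have "\<dots> = (\<Sum>j<m. real (card (CC S j)) * f j)" by simp
  finally show ?thesis .
qed

lemma cell_facts:
  assumes tk: "total_k_dominating (rook_verts N M) rook_adj 2 S" and p: "(i,j) \<in> S"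
  shows "card (RR S i) \<ge> 1" "card (CC S j) \<ge> 1" "card (RR S i) + card (CC S j) \<ge> 4"
proof -
  have sub: "S \<subseteq> rook_verts N M" and h: "\<forall>i<N. \<forall>j<M. card (RR S i - {j}) + card (CC S j - {i}) \<ge> 2"
    using tk unfolding tkd_iff by auto
  have ij: "i < N" "j < M" using sub p by (auto simp: board)
  have jR: "j \<in> RR S i" and iC: "i \<in> CC S j" using p by (auto simp: RR_def CC_def)
  have fR: "finite (RR S i)" and fC: "finite (CC S j)" using RR_fin[OF sub] CC_fin[OF sub] by auto
  show r1: "card (RR S i) \<ge> 1" using jR fR by (auto simp: Suc_le_eq card_gt_0_iff)
  show c1: "card (CC S j) \<ge> 1" using iC fC by (auto simp: Suc_le_eq card_gt_0_iff)
  have "card (RR S i - {j}) = card (RR S i) - 1" using jR fR by simp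
  moreover have "card (CC S j - {i}) = card (CC S j) - 1" using iC fC by simp
  ultimately show "card (RR S i) + card (CC S j) \<ge> 4" using h ij r1 c1 by fastforce
qed

lemma lower_main:
  assumes tk: "total_k_dominating (rook_verts N M) rook_adj 2 S"
    and rows: "\<forall>i<N. RR S i \<noteq> {}" and cols: "\<forall>j<M. CC S j \<noteq> {}"
  shows "3*(N+M) \<le> 4 * card S" and "4 * card S = 3*(N+M) \<Longrightarrow> (3*N) mod 8 = M mod 8"
proof -
  have sub: "S \<subseteq> rook_verts N M" using tk unfolding tkd_iff by auto
  have finS: "finite S" using sub by (rule finite_subset) (simp add: board)
  define r where "r = (\<lambda>i. card (RR S i))"
  define c where "c = (\<lambda>j. card (CC S j))"
  have rpos: "real (r i) > 0" if "i < N" for i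
    using rows that RR_fin[OF sub, of i] unfolding r_def by (auto simp: card_gt_0_iff)
  have cpos: "real (c j) > 0" if "j < M" for j
    using cols that CC_fin[OF sub, of j] unfolding c_def by (auto simp: card_gt_0_iff)
  have sumN: "(\<Sum>p\<in>S. 1 / real (r (fst p))) = real N"
  proof -
    have "(\<Sum>p\<in>S. 1 / real (r (fst p))) = (\<Sum>i<N. real (card (RR S i)) * (1 / real (r i)))"
      by (rule sum_rows[OF sub])
    also have "\<dots> = (\<Sum>i<N. 1)" by (rule sum.cong) (use rpos in \<open>auto simp: r_def\<close>)
    finally show ?thesis by simp
  qed
  have sumM: "(\<Sum>p\<in>S. 1 / real (c (snd p))) = real M"
  proof -
    have "(\<Sum>p\<in>S. 1 / real (c (snd p))) = (\<Sum>j<M. real (card (CC S j)) * (1 / real (c j)))"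
      by (rule sum_cols[OF sub])
    also have "\<dots> = (\<Sum>j<M. 1)" by (rule sum.cong) (use cpos in \<open>auto simp: c_def\<close>)
    finally show ?thesis by simp
  qed
  define w where "w = (\<lambda>p. 1 / real (r (fst p)) + 1 / real (c (snd p)))"
  have cf: "r (fst p) \<ge> 1 \<and> c (snd p) \<ge> 1 \<and> r (fst p) + c (snd p) \<ge> 4" if "p \<in> S" for p
    using cell_facts[OF tk, of "fst p" "snd p"] that unfolding r_def c_def by auto
  have wle: "w p \<le> 4/3" if "p \<in> S" for p
    using frac(1)[of "r (fst p)" "c (snd p)"] cf[OF that] unfolding w_def by auto
  have sumw: "(\<Sum>p\<in>S. w p) = real N + real M"
    unfolding w_def sum.distrib sumN sumM ..
  have "real N + real M \<le> (\<Sum>p\<in>S. 4/3)"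
    unfolding sumw[symmetric] by (rule sum_mono) (rule wle)
  also have "\<dots> = 4/3 * real (card S)" by simp
  finally have le: "3 * (real N + real M) \<le> 4 * real (card S)" by simp
  hence "real (3*(N+M)) \<le> real (4 * card S)" by simp
  thus "3*(N+M) \<le> 4 * card S" by (simp only: of_nat_le_iff)
  assume eqn: "4 * card S = 3*(N+M)"
  hence eqr: "4 * real (card S) = 3 * (real N + real M)" by (metis of_nat_add of_nat_mult of_nat_numeral)
  have "(\<Sum>p\<in>S. 4/3 - w p) = 4/3 * real (card S) - (real N + real M)"
    by (simp add: sum_subtractf sumw)
  also have "\<dots> = 0" using eqr by simp
  finally have "(\<Sum>p\<in>S. 4/3 - w p) = 0" .
  hence weq: "\<forall>p\<in>S. 4/3 - w p = 0"
    using sum_nonneg_eq_0_iff[OF finS, of "\<lambda>p. 4/3 - w p"] wle by auto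
  have ptype: "(r (fst p) = 1 \<and> c (snd p) = 3) \<or> (r (fst p) = 3 \<and> c (snd p) = 1)" if "p \<in> S" for p
    using frac(2)[of "r (fst p)" "c (snd p)"] cf[OF that] weq that unfolding w_def by auto
  define U where "U = {p\<in>S. r (fst p) = 1}"
  define g where "g = (\<lambda>p::nat\<times>nat. if r (fst p) = 1 then (1::real) else 0)"
  have sumg: "(\<Sum>p\<in>S. g p) = real (card U)"
  proof -
    have "(\<Sum>p\<in>U. (1::real)) = (\<Sum>p\<in>S. g p)" unfolding U_def g_def
      by (rule sum.inter_filter[OF finS])
    thus ?thesis by simp
  qed
  have e1: "3 * (1 / real (r (fst p))) = 1 + 2 * g p" if "p \<in> S" for p
    using ptype[OF that] unfolding g_def by auto
  have e2: "3 * (1 / real (c (snd p))) = 3 - 2 * g p" if "p \<in> S" for p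
    using ptype[OF that] unfolding g_def by auto
  have "3 * real N = 3 * (\<Sum>p\<in>S. 1 / real (r (fst p)))" using sumN by simp
  also have "\<dots> = (\<Sum>p\<in>S. 3 * (1 / real (r (fst p))))" by (rule sum_distrib_left)
  also have "\<dots> = (\<Sum>p\<in>S. 1 + 2 * g p)" by (rule sum.cong) (use e1 in auto)
  also have "\<dots> = real (card S) + 2 * real (card U)"
    by (simp add: sum.distrib sum_distrib_left[symmetric] sumg)
  finally have "real (3 * N) = real (card S + 2 * card U)" by simp
  hence A1: "3 * N = card S + 2 * card U" by (simp only: of_nat_eq_iff)
  have "3 * real M = 3 * (\<Sum>p\<in>S. 1 / real (c (snd p)))" using sumM by simp
  also have "\<dots> = (\<Sum>p\<in>S. 3 * (1 / real (c (snd p))))" by (rule sum_distrib_left)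
  also have "\<dots> = (\<Sum>p\<in>S. 3 - 2 * g p)" by (rule sum.cong) (use e2 in auto)
  also have "\<dots> = 3 * real (card S) - 2 * real (card U)"
    by (simp add: sum_subtractf sum_distrib_left[symmetric] sumg)
  finally have "real (3 * M + 2 * card U) = real (3 * card S)" by simp
  hence A2: "3 * M + 2 * card U = 3 * card S" by (simp only: of_nat_eq_iff)
  have "3*N + 8*(3*N) = M + 8*(M + 3 * card U)" using A1 A2 by arith
  hence "(3*N + 8*(3*N)) mod 8 = (M + 8*(M + 3 * card U)) mod 8" by (rule arg_cong)
  thus "(3*N) mod 8 = M mod 8" by (simp only: mod_mult_self2)
qed

lemma arith_xy:
  fixes n m k :: nat
  assumes "n \<ge> 2" "m \<ge> 2" "4*k \<ge> 3*(n+m)" "4*k = 3*(n+m) \<longrightarrow> (3*n) mod 8 = m mod 8"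
   "k < 2*n" "k < 2*m" "\<not>(n = 3 \<and> m = 3)"
  shows "\<exists>x y. 1 \<le> x \<and> 1 \<le> y \<and> x+3*y \<le> n \<and> 3*x+y \<le> m \<and> n+m \<le> k+x+y"
proof -
  have A3: "3*n + 3*m \<le> 4*k" using assms(3) by simp
  define T where "T = max 2 (n+m-k)"
  have T2: "T \<ge> 2" and Tk: "n+m \<le> k + T" unfolding T_def by auto
  have V8: "n+m \<ge> 8"
  proof (rule ccontr)
    assume c: "\<not> n+m \<ge> 8"
    have n6: "n \<le> 5" "m \<le> 5" using c assms(1,2) by linarith+
    have B1: "3*m + 4 \<le> 5*n" using A3 assms(5) by linarith
    have B2: "3*n + 4 \<le> 5*m" using A3 assms(6) by linarith
    have "n = 2 \<or> n = 3 \<or> n = 4 \<or> n = 5" using n6 assms(1) by arith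
    thus False
    proof (elim disjE)
      assume n2: "n = 2"
      hence m2: "m = 2" using B1 assms(2) by arith
      hence "k = 3" using A3 assms(5) n2 by arith
      thus False using assms(4) n2 m2 by simp
    next
      assume "n = 3"
      hence "m = 3" using B1 B2 by arith
      thus False using \<open>n = 3\<close> assms(7) by simp
    next
      assume "n = 4" thus False using B1 B2 c by arith
    next
      assume "n = 5" thus False using B1 B2 c by arith
    qed
  qed
  have T4: "4*T \<le> n+m"
  proof (cases "n+m-k \<le> 2")
    case True hence "T = 2" unfolding T_def by (auto simp: max_def)
    thus ?thesis using V8 by linarith
  next
    case False hence "T = n+m-k" unfolding T_def by (auto simp: max_def)
    thus ?thesis using A3 by linarith
  qed
  have nT: "n \<ge> T + 2" using A3 assms(5) T4 T2 by linarith
  have mT: "m \<ge> T + 2" using A3 assms(6) T4 T2 by linarith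
  define q where "q = (n - T) div 2"
  define r where "r = (n - T) mod 2"
  have qr: "n - T = 2*q + r" "r < 2" unfolding q_def r_def by simp_all
  have q1: "q \<ge> 1" using qr nT by linarith
  have ex: "4*T = n+m \<Longrightarrow> r = 0"
  proof -
    assume e: "4*T = n+m"
    show "r = 0"
    proof (cases "n+m-k \<ge> 2")
      case False
      hence "T = 2" unfolding T_def by (auto simp: max_def)
      hence "n = 4" using e False assms(5,6) by linarith
      hence "2*q + r = 2" using qr \<open>T = 2\<close> by simp
      thus "r = 0" using qr(2) by arith
    next
      case True
    hence "T = n+m-k" unfolding T_def by (auto simp: max_def)
    moreover have "k < n + m" using assms(5,6) by linarith
    ultimately have "T + k = n + m" by simp
    hence "4*k = 3*(n+m)" using e by arith
    hence "(3*n) mod 8 = m mod 8" using assms(4) by blast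
    moreover have "8*q + 4*r + m = 3*n" using qr e nT by linarith
    ultimately show "r = 0"
    proof -
      assume md: "(3*n) mod 8 = m mod 8" and eq3: "8*q + 4*r + m = 3*n"
      show "r = 0"
      proof (rule ccontr)
        assume "r \<noteq> 0"
        hence "r = 1" using qr(2) by linarith
        hence "3*n = (m+4) + 8*q" using eq3 by linarith
        hence "(3*n) mod 8 = (m+4) mod 8" by simp
        hence "(m+4) mod 8 = m mod 8" using md by simp
        thus False by presburger
      qed
    qed
    qed
  qed
  define y where "y = min (T-1) q"
  define x where "x = T - y"
  have "1 \<le> x \<and> 1 \<le> y \<and> x+3*y \<le> n \<and> 3*x+y \<le> m \<and> n+m \<le> k+x+y"
  proof (cases "T - 1 \<le> q")
    case True
    hence "y = T - 1" unfolding y_def by simp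
    then show ?thesis using True T2 Tk qr nT mT unfolding x_def by linarith
  next
    case False
    hence y: "y = q" unfolding y_def by simp
    have "3*T \<le> m + 2*q"
    proof (cases "4*T = n+m")
      case True then show ?thesis using ex qr nT by linarith
    next
      case False then show ?thesis using T4 qr nT by linarith
    qed
    then show ?thesis using False y T2 Tk qr nT mT q1 unfolding x_def by linarith
  qed
  then show ?thesis by blast
qed


lemma small_ub:
  fixes n m k :: nat
  assumes "n \<ge> 2" "m \<ge> 2" "4*k \<ge> 3*(n+m)" "4*k = 3*(n+m) \<longrightarrow> (3*n) mod 8 = m mod 8"
   "k < 2*n" "k < 2*m"
  shows "gamma_2t (rook_verts n m) rook_adj \<le> k"
proof (cases "n = 3 \<and> m = 3")
  case True
  hence "3*(3+3) \<le> 4*k" using assms by simp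
  hence "k \<ge> 5" by presburger
  thus ?thesis using g33 True by simp
next
  case False
  then obtain x y where xy: "1 \<le> x" "1 \<le> y" "x+3*y \<le> n" "3*x+y \<le> m" "n+m \<le> k+x+y"
    using arith_xy[OF assms] by blast
  show ?thesis using stars[OF xy(1-4)] xy(5) by linarith
qed

lemma card_rows:
  assumes "S \<subseteq> rook_verts n m"
  shows "card S = (\<Sum>i<n. card (RR S i))"
proof -
  have "card S = card (Sigma {..<n} (RR S))" using S_rows[OF assms] by simp
  also have "\<dots> = (\<Sum>i<n. card (RR S i))" using RR_fin[OF assms] by simp
  finally show ?thesis .
qed

lemma empty_row:
  assumes tk: "total_k_dominating (rook_verts N M) rook_adj 2 S" and i0: "i0 < N" "RR S i0 = {}"
  shows "2*M \<le> card S"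
proof -
  have sub: "S \<subseteq> rook_verts N M" and h: "\<forall>i<N. \<forall>j<M. card (RR S i - {j}) + card (CC S j - {i}) \<ge> 2"
    using tk unfolding tkd_iff by auto
  have "card (CC S j) \<ge> 2" if "j < M" for j
  proof -
    have "card (CC S j - {i0}) \<ge> 2" using h i0 that by fastforce
    also have "card (CC S j - {i0}) \<le> card (CC S j)" by (rule card_mono[OF CC_fin[OF sub]]) auto
    finally show ?thesis .
  qed
  hence "(\<Sum>j<M. 2) \<le> (\<Sum>j<M. card (CC S j))" by (intro sum_mono) auto
  thus ?thesis using card_cols[OF sub] by simp
qed

lemma empty_col:
  assumes tk: "total_k_dominating (rook_verts N M) rook_adj 2 S" and j0: "j0 < M" "CC S j0 = {}"
  shows "2*N \<le> card S"
proof -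
  have sub: "S \<subseteq> rook_verts N M" and h: "\<forall>i<N. \<forall>j<M. card (RR S i - {j}) + card (CC S j - {i}) \<ge> 2"
    using tk unfolding tkd_iff by auto
  have "card (RR S i) \<ge> 2" if "i < N" for i
  proof -
    have "card (RR S i - {j0}) \<ge> 2" using h j0 that by fastforce
    also have "card (RR S i - {j0}) \<le> card (RR S i)" by (rule card_mono[OF RR_fin[OF sub]]) auto
    finally show ?thesis .
  qed
  hence "(\<Sum>i<N. 2) \<le> (\<Sum>i<N. card (RR S i))" by (intro sum_mono) auto
  thus ?thesis using card_rows[OF sub] by simp
qed

lemma extend:
  assumes tk: "total_k_dominating (rook_verts n m) rook_adj 2 S"
    and rows: "\<forall>i<n. RR S i \<noteq> {}" and cols: "\<forall>j<m. CC S j \<noteq> {}"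
  defines "X \<equiv> {(n,m),(n,m+1),(n,m+2),(n+1,m+3),(n+2,m+3),(n+3,m+3)}"
  shows "total_k_dominating (rook_verts (n+4) (m+4)) rook_adj 2 (S \<union> X)"
    and "card (S \<union> X) \<le> card S + 6"
proof -
  have sub: "S \<subseteq> rook_verts n m" and h: "\<forall>i<n. \<forall>j<m. card (RR S i - {j}) + card (CC S j - {i}) \<ge> 2"
    using tk unfolding tkd_iff by auto
  have R1: "i < n \<Longrightarrow> RR (S \<union> X) i = RR S i" for i by (auto simp: RR_def X_def)
  have C1: "j < m \<Longrightarrow> CC (S \<union> X) j = CC S j" for j by (auto simp: CC_def X_def)
  have RS: "i \<ge> n \<Longrightarrow> RR S i = {}" for i using sub by (auto simp: RR_def board)
  have CS: "j \<ge> m \<Longrightarrow> CC S j = {}" for j using sub by (auto simp: CC_def board)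
  have R2: "i \<ge> n \<Longrightarrow> RR (S \<union> X) i = RR X i" for i using RS[of i] by (auto simp: RR_def)
  have C2: "j \<ge> m \<Longrightarrow> CC (S \<union> X) j = CC X j" for j using CS[of j] by (auto simp: CC_def)
  have RX0: "RR X n = {m, m+1, m+2}" by (auto simp: RR_def X_def)
  have RX1: "a \<in> {1,2,3} \<Longrightarrow> RR X (n+a) = {m+3}" for a by (auto simp: RR_def X_def)
  have CX0: "b \<in> {0,1,2} \<Longrightarrow> CC X (m+b) = {n}" for b by (auto simp: CC_def X_def)
  have CX1: "CC X (m+3) = {n+1, n+2, n+3}" by (auto simp: CC_def X_def)
  have CXi: "CC X j \<subseteq> {n..}" for j by (auto simp: CC_def X_def)
  have CXne: "CC X (m+b) \<noteq> {}" if "b < 4" for b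
  proof (cases "b = 3")
    case True thus ?thesis using CX1 by simp
  next
    case False hence "b \<in> {0,1,2}" using that by auto
    thus ?thesis using CX0[of b] by simp
  qed
  have RXi: "RR X i \<subseteq> {m..}" for i by (auto simp: RR_def X_def)
  have RXne: "RR X (n+a) \<noteq> {}" if "a < 4" for a
  proof (cases "a = 0")
    case True thus ?thesis using RX0 by simp
  next
    case False hence "a \<in> {1,2,3}" using that by auto
    thus ?thesis using RX1[of a] by simp
  qed
  have subX: "S \<union> X \<subseteq> rook_verts (n+4) (m+4)" using sub by (auto simp: board X_def)
  show "total_k_dominating (rook_verts (n+4) (m+4)) rook_adj 2 (S \<union> X)"
    unfolding tkd_iff
  proof (intro conjI allI impI subX)
    fix i j assume ij: "i < n+4" "j < m+4"
    have finR: "finite (RR (S \<union> X) i)" and finC: "finite (CC (S \<union> X) j)"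
      using RR_fin[OF subX] CC_fin[OF subX] by auto
    show "card (RR (S \<union> X) i - {j}) + card (CC (S \<union> X) j - {i}) \<ge> 2"
    proof (cases "i < n")
      case iT: True
      show ?thesis
      proof (cases "j < m")
        case True thus ?thesis using h iT R1 C1 by auto
      next
        case False
        define b where "b = j - m"
        have b: "j = m + b" "b < 4" using ij False unfolding b_def by auto
        have "RR (S \<union> X) i - {j} = RR S i" using R1[OF iT] RR_sub[OF sub, of i] b by auto
        moreover have "CC (S \<union> X) j - {i} = CC X j" using C2[of j] CXi[of j] b iT by auto
        moreover have "card (RR S i) \<ge> 1" using rows iT RR_fin[OF sub, of i] by (auto simp: Suc_le_eq card_gt_0_iff)
        moreover have "card (CC X j) \<ge> 1" using CXne[OF b(2)] b finC C2[of j] by (auto simp: Suc_le_eq card_gt_0_iff)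
        ultimately show ?thesis by simp
      qed
    next
      case iF: False
      define a where "a = i - n"
      have a: "i = n + a" "a < 4" using ij iF unfolding a_def by auto
      show ?thesis
      proof (cases "j < m")
        case jT: True
        have "CC (S \<union> X) j - {i} = CC S j" using C1[OF jT] CC_sub[OF sub, of j] a by auto
        moreover have "RR (S \<union> X) i - {j} = RR X i" using R2[of i] RXi[of i] a jT by auto
        moreover have "card (CC S j) \<ge> 1" using cols jT CC_fin[OF sub, of j] by (auto simp: Suc_le_eq card_gt_0_iff)
        moreover have "card (RR X i) \<ge> 1" using RXne[OF a(2)] a finR R2[of i] by (auto simp: Suc_le_eq card_gt_0_iff)
        ultimately show ?thesis by simp
      next
        case False
        define b where "b = j - m"
        have b: "j = m + b" "b < 4" using ij False unfolding b_def by auto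
        have Ri: "RR (S \<union> X) i = RR X i" and Cj: "CC (S \<union> X) j = CC X j" using R2 C2 a b by auto
        have "a = 0 \<or> a = 1 \<or> a = 2 \<or> a = 3" "b = 0 \<or> b = 1 \<or> b = 2 \<or> b = 3" using a b by auto
        hence "2 \<le> card (RR X (n+a) - {m+b}) + card (CC X (m+b) - {n+a})"
          using RX0 RX1[of 1] RX1[of 2] RX1[of 3] CX0[of 0] CX0[of 1] CX0[of 2] CX1
          by (elim disjE) (simp_all add: card_insert_if)
        thus ?thesis using Ri Cj a(1) b(1) by simp
      qed
    qed
  qed
  have "card (S \<union> X) \<le> card S + card X" by (rule card_Un_le)
  moreover have "card X \<le> 6" unfolding X_def by (simp add: card_insert_if)
  ultimately show "card (S \<union> X) \<le> card S + 6" by linarith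
qed


lemma mod_shift: "(3*(n+4)) mod 8 = ((m::nat)+4) mod 8 \<Longrightarrow> (3*n) mod 8 = m mod 8" by presburger

theorem theorem12:
  fixes n m :: nat
  assumes "n \<ge> 2" and "m \<ge> 2"
    and "\<exists>S. total_k_dominating (rook_verts n m) rook_adj 2 S
            \<and> card S = gamma_2t (rook_verts n m) rook_adj
            \<and> (\<forall>v\<in>complete_graph_verts n. S \<inter> ({v} \<times> complete_graph_verts m) \<noteq> {})
            \<and> (\<forall>w\<in>complete_graph_verts m. S \<inter> (complete_graph_verts n \<times> {w}) \<noteq> {})"
  shows "gamma_2t (rook_verts (n + 4) (m + 4)) rook_adj = gamma_2t (rook_verts n m) rook_adj + 6"
proof -
  obtain S0 where tk0: "total_k_dominating (rook_verts n m) rook_adj 2 S0"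
    and c0: "card S0 = gamma_2t (rook_verts n m) rook_adj"
    and hr: "\<forall>v\<in>complete_graph_verts n. S0 \<inter> ({v} \<times> complete_graph_verts m) \<noteq> {}"
    and hc: "\<forall>w\<in>complete_graph_verts m. S0 \<inter> (complete_graph_verts n \<times> {w}) \<noteq> {}"
    using assms(3) by blast
  have rows0: "\<forall>i<n. RR S0 i \<noteq> {}"
  proof (intro allI impI)
    fix i assume "i < n"
    hence "S0 \<inter> ({i} \<times> complete_graph_verts m) \<noteq> {}" using hr by (simp add: complete_graph_verts_def)
    thus "RR S0 i \<noteq> {}" by (auto simp: RR_def)
  qed
  have cols0: "\<forall>j<m. CC S0 j \<noteq> {}"
  proof (intro allI impI)
    fix j assume "j < m"
    hence "S0 \<inter> (complete_graph_verts n \<times> {j}) \<noteq> {}" using hc by (simp add: complete_graph_verts_def)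
    thus "CC S0 j \<noteq> {}" by (auto simp: CC_def)
  qed
  note ext = extend[OF tk0 rows0 cols0]
  have ub: "gamma_2t (rook_verts (n + 4) (m + 4)) rook_adj \<le> gamma_2t (rook_verts n m) rook_adj + 6"
    using gamma_le[OF ext(1)] ext(2) c0 by linarith
  obtain S' where tk': "total_k_dominating (rook_verts (n+4) (m+4)) rook_adj 2 S'"
    and c': "card S' = gamma_2t (rook_verts (n+4) (m+4)) rook_adj"
    using gamma_ex[OF ext(1)] by blast
  have g2m: "gamma_2t (rook_verts n m) rook_adj \<le> 2*m" by (rule two_rows[OF assms(1,2)])
  have g2n: "gamma_2t (rook_verts n m) rook_adj \<le> 2*n" by (rule two_cols[OF assms(1,2)])
  have lb: "gamma_2t (rook_verts n m) rook_adj + 6 \<le> card S'"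
  proof (cases "\<exists>i<n+4. RR S' i = {}")
    case True
    then obtain i where "i < n+4" "RR S' i = {}" by blast
    from empty_row[OF tk' this] show ?thesis using g2m by arith
  next
    case nr: False
    show ?thesis
    proof (cases "\<exists>j<m+4. CC S' j = {}")
      case True
      then obtain j where "j < m+4" "CC S' j = {}" by blast
      from empty_col[OF tk' this] show ?thesis using g2n by arith
    next
      case False
      have rows: "\<forall>i<n+4. RR S' i \<noteq> {}" using nr by blast
      have cols: "\<forall>j<m+4. CC S' j \<noteq> {}" using False by blast
      note L = lower_main[OF tk' rows cols]
      define e where "e = card S'"
      have L1: "3*((n+4)+(m+4)) \<le> 4*e" using L(1) unfolding e_def .
      have L2: "4*e = 3*((n+4)+(m+4)) \<Longrightarrow> (3*(n+4)) mod 8 = (m+4) mod 8" using L(2) unfolding e_def .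
      define k where "k = e - 6"
      have e6: "e \<ge> 6" using L1 by arith
      have ek: "e = k + 6" using e6 unfolding k_def by simp
      have k4: "4*k \<ge> 3*(n+m)" using L1 ek by arith
      have kex: "4*k = 3*(n+m) \<longrightarrow> (3*n) mod 8 = m mod 8"
      proof
        assume "4*k = 3*(n+m)"
        hence "4*e = 3*((n+4)+(m+4))" using ek by arith
        thus "(3*n) mod 8 = m mod 8" using L2 mod_shift by blast
      qed
      have "gamma_2t (rook_verts n m) rook_adj \<le> k"
      proof (cases "k < 2*n \<and> k < 2*m")
        case True thus ?thesis using small_ub[OF assms(1,2) k4 kex] by blast
      next
        case False thus ?thesis using g2m g2n by linarith
      qed
      thus ?thesis using ek unfolding e_def by linarith
    qed
  qed
  show ?thesis using ub lb c' by linarith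
qed


end
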